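(* For any $x,y\in\mathbb{R}^d$, $$\|x\odot\texttt{FLT}_\alpha(x)\|_1-\|x\odot\texttt{FLT}_\alpha(y)\|_1\le2\|x-y\|_1.$$
   Context: The coordinates of $\mathbb{R}^d$ are partitioned into $B$ blocks of sizes $d_1,\dots,d_B$ with $\sum_kd_k=d$; write $z=(z^{(1)},\dots,z^{(B)})$, $z^{(k)}\in\mathbb{R}^{d_k}$. Fix $\alpha\%\in(0,1]$. The top-$\alpha\%$ filter $\texttt{FLT}_\alpha(z)\in\{0,1\}^d$ is defined blockwise: in block $k$ it equals $1$ exactly on a set $S_k$ of $\lceil d_k\cdot\alpha\%\rceil$ indices whose absolute values $|z^{(k)}_i|$ rank within the top-$\alpha\%$ of the block (ties broken in favour of smaller indices), and $0$ elsewhere. $\odot$ is the entrywise product. *)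

theory Defs
  imports Complex_Main
begin

text \<open>Vectors in R^d are functions nat => real; only coordinates 0..<d matter.
  The block structure is a list ds = [d_1,...,d_B] of block sizes; block k
  (0-based) consists of the contiguous coordinates
  blk_start ds k ..< blk_start ds k + ds!k.\<close>

definition blk_start :: "nat list \<Rightarrow> nat \<Rightarrow> nat" where
  "blk_start ds k = sum_list (take k ds)"

definition block :: "nat list \<Rightarrow> nat \<Rightarrow> nat set" where
  "block ds k = {blk_start ds k ..< blk_start ds k + ds ! k}"

text \<open>Rank of coordinate i inside the index set A with respect to |z|, ties broken
  in favour of smaller indices (rank 0 = largest).\<close>
definition rank_in :: "nat set \<Rightarrow> (nat \<Rightarrow> real) \<Rightarrow> nat \<Rightarrow> nat" where
  "rank_in A z i = card {j \<in> A. \<bar>z j\<bar> > \<bar>z i\<bar> \<or> (\<bar>z j\<bar> = \<bar>z i\<bar> \<and> j < i)}"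

definition FLT :: "nat list \<Rightarrow> real \<Rightarrow> (nat \<Rightarrow> real) \<Rightarrow> nat \<Rightarrow> real" where
  "FLT ds \<alpha> z i =
     (if \<exists>k < length ds. i \<in> block ds k \<and>
                          rank_in (block ds k) z i < nat \<lceil>real (ds ! k) * \<alpha>\<rceil>
      then 1 else 0)"

definition norm1 :: "nat \<Rightarrow> (nat \<Rightarrow> real) \<Rightarrow> real" where
  "norm1 d x = (\<Sum>i<d. \<bar>x i\<bar>)"

end

theory Submission
  imports Defs
begin

definition rk :: "nat set \<Rightarrow> (nat \<Rightarrow> real) \<Rightarrow> nat \<Rightarrow> nat" where
  "rk A w i = card {j \<in> A. w j > w i \<or> (w j = w i \<and> j < i)}"

lemma rank_rk: "rank_in A z = rk A (\<lambda>k. \<bar>z k\<bar>)"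
  unfolding rank_in_def rk_def by (rule ext) simp

lemma rk_mono:
  assumes "finite A" "w j < w i"
  shows "rk A w i \<le> rk A w j"
  unfolding rk_def
  by (rule card_mono) (use assms in auto)

lemma rank_mono:
  assumes "finite A" "\<bar>z j\<bar> < \<bar>z i\<bar>"
  shows "rank_in A z i \<le> rank_in A z j"
  unfolding rank_rk by (rule rk_mono) (use assms in auto)

lemma rk_strict:
  assumes "finite A" "i \<in> A" "j \<in> A"
    and "w j > w i \<or> (w j = w i \<and> j < i)"
  shows "rk A w j < rk A w i"
  unfolding rk_def
proof (rule psubset_card_mono)
  show "finite {k \<in> A. w k > w i \<or> (w k = w i \<and> k < i)}" using assms by auto
  show "{k \<in> A. w k > w j \<or> (w k = w j \<and> k < j)} \<subset> {k \<in> A. w k > w i \<or> (w k = w i \<and> k < i)}"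
    using assms by auto
qed

lemma rank_strict:
  assumes "finite A" "i \<in> A" "j \<in> A"
    and "\<bar>z j\<bar> > \<bar>z i\<bar> \<or> (\<bar>z j\<bar> = \<bar>z i\<bar> \<and> j < i)"
  shows "rank_in A z j < rank_in A z i"
  unfolding rank_rk using rk_strict[OF assms(1,2,3), of "\<lambda>k. \<bar>z k\<bar>"] assms(4) by blast

lemma rk_inj:
  assumes "finite A"
  shows "inj_on (rk A w) A"
proof (rule inj_onI)
  fix i j assume ij: "i \<in> A" "j \<in> A" "rk A w i = rk A w j"
  show "i = j"
  proof (rule ccontr)
    assume "i \<noteq> j"
    then have o: "j < i \<or> i < j" by arith
    have "w j > w i \<or> w i > w j \<or> w j = w i" by linarith
    moreover have "\<not> (w j > w i \<or> (w j = w i \<and> j < i))"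
      using rk_strict[OF assms ij(1,2), where w=w] ij(3) by auto
    moreover have "\<not> (w i > w j \<or> (w i = w j \<and> i < j))"
      using rk_strict[OF assms ij(2,1), where w=w] ij(3) by auto
    ultimately show False using o by auto
  qed
qed

lemma rk_lt:
  assumes "finite A" "i \<in> A"
  shows "rk A w i < card A"
  unfolding rk_def
  by (rule psubset_card_mono) (use assms in auto)

lemma rk_bij:
  assumes "finite A"
  shows "rk A w ` A = {..<card A}"
proof -
  have "rk A w ` A \<subseteq> {..<card A}" using rk_lt[OF assms] by auto
  moreover have "card (rk A w ` A) = card {..<card A}"
    using card_image[OF rk_inj[OF assms]] by simp
  ultimately show ?thesis by (simp add: card_subset_eq)
qed

lemma rk_card_top:
  assumes "finite A" "m \<le> card A"
  shows "card {i \<in> A. rk A w i < m} = m"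
proof -
  have "card {i \<in> A. rk A w i < m} = card (rk A w ` {i \<in> A. rk A w i < m})"
    by (rule card_image[symmetric]) (rule inj_on_subset[OF rk_inj[OF assms(1)]], auto)
  also have "rk A w ` {i \<in> A. rk A w i < m} = {..<m}"
  proof
    show "rk A w ` {i \<in> A. rk A w i < m} \<subseteq> {..<m}" by auto
    show "{..<m} \<subseteq> rk A w ` {i \<in> A. rk A w i < m}"
    proof
      fix r assume "r \<in> {..<m}"
      then have "r \<in> rk A w ` A" using rk_bij[OF assms(1)] assms(2) by auto
      then obtain i where "i \<in> A" "r = rk A w i" by auto
      then show "r \<in> rk A w ` {i \<in> A. rk A w i < m}" using \<open>r \<in> {..<m}\<close> by auto
    qed
  qed
  finally show ?thesis by simp
qed

lemma card_top:
  assumes "finite A" "m \<le> card A"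
  shows "card {i \<in> A. rank_in A z i < m} = m"
  unfolding rank_rk by (rule rk_card_top[OF assms])

lemma sum_le_card:
  fixes g :: "nat \<Rightarrow> real"
  assumes "finite P" "finite Q" "card P = card Q" "\<forall>i\<in>P. \<forall>j\<in>Q. g i \<le> g j"
  shows "sum g P \<le> sum g Q"
proof (cases "P = {}")
  case True
  then have "Q = {}" using assms by auto
  then show ?thesis using True by simp
next
  case False
  define c where "c = Max (g ` P)"
  have "sum g P \<le> of_nat (card P) * c"
    using sum_bounded_above[of P g c] assms(1) False unfolding c_def by auto
  also have "\<dots> = of_nat (card Q) * c" using assms(3) by simp
  also have "\<dots> \<le> sum g Q"
  proof -
    have "\<forall>j\<in>Q. c \<le> g j" unfolding c_def using assms(1,4) False
      by (auto intro!: Max.boundedI)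
    then show ?thesis using sum_bounded_below[of Q c g] by auto
  qed
  finally show ?thesis .
qed

lemma block_bound:
  fixes x y :: "nat \<Rightarrow> real"
  assumes "finite A" "Sx \<subseteq> A" "Sy \<subseteq> A" "card Sx = card Sy"
    and "\<forall>i\<in>A - Sy. \<forall>j\<in>Sy. \<bar>y i\<bar> \<le> \<bar>y j\<bar>"
  shows "sum (\<lambda>i. \<bar>x i\<bar>) Sx - sum (\<lambda>i. \<bar>x i\<bar>) Sy \<le> sum (\<lambda>i. \<bar>x i - y i\<bar>) A"
proof -
  define P where "P = Sx - Sy"
  define Q where "Q = Sy - Sx"
  have fin: "finite Sx" "finite Sy" "finite P" "finite Q"
    using assms unfolding P_def Q_def by (auto intro: finite_subset)
  have u1: "Sx = P \<union> (Sx \<inter> Sy)" "P \<inter> (Sx \<inter> Sy) = {}" unfolding P_def by auto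
  have u2: "Sy = Q \<union> (Sx \<inter> Sy)" "Q \<inter> (Sx \<inter> Sy) = {}" unfolding Q_def by auto
  have fI: "finite (Sx \<inter> Sy)" using fin by auto
  have e1: "sum (\<lambda>i. \<bar>x i\<bar>) Sx = sum (\<lambda>i. \<bar>x i\<bar>) P + sum (\<lambda>i. \<bar>x i\<bar>) (Sx \<inter> Sy)"
    by (subst u1(1), rule sum.union_disjoint[OF fin(3) fI u1(2)])
  have e2: "sum (\<lambda>i. \<bar>x i\<bar>) Sy = sum (\<lambda>i. \<bar>x i\<bar>) Q + sum (\<lambda>i. \<bar>x i\<bar>) (Sx \<inter> Sy)"
    by (subst u2(1), rule sum.union_disjoint[OF fin(4) fI u2(2)])
  have cPQ: "card P = card Q"
  proof -
    have "card Sx = card P + card (Sx \<inter> Sy)"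
      by (subst u1(1), rule card_Un_disjoint[OF fin(3) fI u1(2)])
    moreover have "card Sy = card Q + card (Sx \<inter> Sy)"
      by (subst u2(1), rule card_Un_disjoint[OF fin(4) fI u2(2)])
    ultimately show ?thesis using assms(4) by simp
  qed
  have "sum (\<lambda>i. \<bar>y i\<bar>) P \<le> sum (\<lambda>i. \<bar>y i\<bar>) Q"
    by (rule sum_le_card[OF fin(3,4) cPQ]) (use assms(2,5) in \<open>auto simp: P_def Q_def\<close>)
  moreover have "sum (\<lambda>i. \<bar>x i\<bar>) P \<le> sum (\<lambda>i. \<bar>y i\<bar>) P + sum (\<lambda>i. \<bar>x i - y i\<bar>) P"
    unfolding sum.distrib[symmetric] by (rule sum_mono) linarith
  moreover have "sum (\<lambda>i. \<bar>y i\<bar>) Q \<le> sum (\<lambda>i. \<bar>x i\<bar>) Q + sum (\<lambda>i. \<bar>x i - y i\<bar>) Q"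
    unfolding sum.distrib[symmetric] by (rule sum_mono) linarith
  moreover have "sum (\<lambda>i. \<bar>x i - y i\<bar>) P + sum (\<lambda>i. \<bar>x i - y i\<bar>) Q \<le> sum (\<lambda>i. \<bar>x i - y i\<bar>) A"
  proof -
    have "sum (\<lambda>i. \<bar>x i - y i\<bar>) P + sum (\<lambda>i. \<bar>x i - y i\<bar>) Q = sum (\<lambda>i. \<bar>x i - y i\<bar>) (P \<union> Q)"
      by (rule sum.union_disjoint[symmetric]) (use fin in \<open>auto simp: P_def Q_def\<close>)
    also have "\<dots> \<le> sum (\<lambda>i. \<bar>x i - y i\<bar>) A"
      by (rule sum_mono2[OF assms(1)]) (use assms(2,3) in \<open>auto simp: P_def Q_def\<close>)
    finally show ?thesis .
  qed
  ultimately show ?thesis using e1 e2 by linarith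
qed

lemma bs_Suc: "k < length ds \<Longrightarrow> blk_start ds (Suc k) = blk_start ds k + ds ! k"
  unfolding blk_start_def by (simp add: take_Suc_conv_app_nth)

lemma bs_Suc_le: "blk_start ds k \<le> blk_start ds (Suc k)"
proof (cases "k < length ds")
  case True then show ?thesis by (simp add: bs_Suc)
next
  case False then show ?thesis unfolding blk_start_def by simp
qed

lemma bs_mono: "k \<le> k' \<Longrightarrow> blk_start ds k \<le> blk_start ds k'"
  by (rule lift_Suc_mono_le[of "blk_start ds"]) (auto intro: bs_Suc_le)

lemma block_unique:
  assumes "k < length ds" "k' < length ds" "i \<in> block ds k" "i \<in> block ds k'"
  shows "k = k'"
proof (rule ccontr)
  assume "k \<noteq> k'"
  then consider "k < k'" | "k' < k" by arith
  then show False
  proof cases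
    case 1
    then have "blk_start ds (Suc k) \<le> blk_start ds k'" by (intro bs_mono) simp
    then show False using assms bs_Suc[OF assms(1)] unfolding block_def by auto
  next
    case 2
    then have "blk_start ds (Suc k') \<le> blk_start ds k" by (intro bs_mono) simp
    then show False using assms bs_Suc[OF assms(2)] unfolding block_def by auto
  qed
qed

lemma FLT_block:
  assumes "k < length ds" "i \<in> block ds k"
  shows "FLT ds \<alpha> z i = (if rank_in (block ds k) z i < nat \<lceil>real (ds ! k) * \<alpha>\<rceil> then 1 else 0)"
  unfolding FLT_def using block_unique[OF assms(1) _ assms(2)] assms by metis

lemma bs_len: "blk_start ds (length ds) = sum_list ds"
  unfolding blk_start_def by simp

lemma sum_blocks:
  fixes h :: "nat \<Rightarrow> real"
  shows "n \<le> length ds \<Longrightarrow> (\<Sum>i<blk_start ds n. h i) = (\<Sum>k<n. \<Sum>i\<in>block ds k. h i)"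
proof (induction n)
  case 0
  then show ?case unfolding blk_start_def by simp
next
  case (Suc n)
  then have n: "n < length ds" by simp
  have "(\<Sum>i<blk_start ds (Suc n). h i) = (\<Sum>i\<in>{0..<blk_start ds n}. h i) + (\<Sum>i\<in>{blk_start ds n..<blk_start ds n + ds ! n}. h i)"
    unfolding bs_Suc[OF n] lessThan_atLeast0 by (rule sum.atLeastLessThan_concat[symmetric]) auto
  also have "\<dots> = (\<Sum>k<n. \<Sum>i\<in>block ds k. h i) + (\<Sum>i\<in>block ds n. h i)"
    using Suc n unfolding block_def lessThan_atLeast0[symmetric] by simp
  finally show ?case by simp
qed

lemma M_le:
  assumes "0 < \<alpha>" "\<alpha> \<le> 1"
  shows "nat \<lceil>real n * \<alpha>\<rceil> \<le> n"
proof -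
  have "real n * \<alpha> \<le> real n" using assms by (simp add: mult_left_le)
  then have "\<lceil>real n * \<alpha>\<rceil> \<le> int n" by (simp add: ceiling_le_iff)
  then show ?thesis by (metis nat_int nat_mono)
qed

lemma per_block:
  fixes x y :: "nat \<Rightarrow> real"
  assumes "k < length ds" "0 < \<alpha>" "\<alpha> \<le> 1"
  shows "(\<Sum>i\<in>block ds k. \<bar>x i\<bar> * FLT ds \<alpha> x i - \<bar>x i\<bar> * FLT ds \<alpha> y i)
         \<le> (\<Sum>i\<in>block ds k. \<bar>x i - y i\<bar>)"
proof -
  define A where "A = block ds k"
  define M where "M = nat \<lceil>real (ds ! k) * \<alpha>\<rceil>"
  define Sx where "Sx = {i \<in> A. rank_in A x i < M}"
  define Sy where "Sy = {i \<in> A. rank_in A y i < M}"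
  have fA: "finite A" unfolding A_def block_def by simp
  have cA: "card A = ds ! k" unfolding A_def block_def by simp
  have Mle: "M \<le> card A" unfolding M_def cA using M_le[OF assms(2,3)] .
  have cS: "card Sx = card Sy" unfolding Sx_def Sy_def card_top[OF fA Mle] ..
  have cond: "\<forall>i\<in>A - Sy. \<forall>j\<in>Sy. \<bar>y i\<bar> \<le> \<bar>y j\<bar>"
  proof (intro ballI)
    fix i j assume i: "i \<in> A - Sy" and j: "j \<in> Sy"
    show "\<bar>y i\<bar> \<le> \<bar>y j\<bar>"
    proof (rule ccontr)
      assume "\<not> \<bar>y i\<bar> \<le> \<bar>y j\<bar>"
      then have "rank_in A y i \<le> rank_in A y j" by (intro rank_mono[OF fA]) simp
      then show False using i j unfolding Sy_def by auto
    qed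
  qed
  have ex: "(\<Sum>i\<in>A. \<bar>x i\<bar> * FLT ds \<alpha> z i) = sum (\<lambda>i. \<bar>x i\<bar>) {i \<in> A. rank_in A z i < M}" for z
  proof -
    have "(\<Sum>i\<in>A. \<bar>x i\<bar> * FLT ds \<alpha> z i) = (\<Sum>i\<in>A. if rank_in A z i < M then \<bar>x i\<bar> else 0)"
      by (rule sum.cong) (auto simp: FLT_block[OF assms(1)] A_def M_def)
    also have "\<dots> = sum (\<lambda>i. \<bar>x i\<bar>) {i \<in> A. rank_in A z i < M}"
      by (rule sum.inter_filter[OF fA, symmetric])
    finally show ?thesis .
  qed
  have "(\<Sum>i\<in>A. \<bar>x i\<bar> * FLT ds \<alpha> x i - \<bar>x i\<bar> * FLT ds \<alpha> y i)
        = sum (\<lambda>i. \<bar>x i\<bar>) Sx - sum (\<lambda>i. \<bar>x i\<bar>) Sy"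
    unfolding sum_subtractf ex Sx_def Sy_def ..
  also have "\<dots> \<le> (\<Sum>i\<in>A. \<bar>x i - y i\<bar>)"
    by (rule block_bound[OF fA _ _ cS cond]) (auto simp: Sx_def Sy_def)
  finally show ?thesis unfolding A_def .
qed

lemma FLT_01: "FLT ds \<alpha> z i = 0 \<or> FLT ds \<alpha> z i = 1"
  unfolding FLT_def by simp

theorem lemma1:
  fixes ds :: "nat list" and d :: nat and \<alpha> :: real and x y :: "nat \<Rightarrow> real"
  assumes "d = sum_list ds"
    and "0 < \<alpha>" and "\<alpha> \<le> 1"
  shows "norm1 d (\<lambda>i. x i * FLT ds \<alpha> x i) - norm1 d (\<lambda>i. x i * FLT ds \<alpha> y i)
           \<le> 2 * norm1 d (\<lambda>i. x i - y i)"
proof -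
  have ab: "\<bar>x i * FLT ds \<alpha> z i\<bar> = \<bar>x i\<bar> * FLT ds \<alpha> z i" for i z
    using FLT_01[of ds \<alpha> z i] by auto
  have d: "d = blk_start ds (length ds)" using assms(1) bs_len by simp
  have "norm1 d (\<lambda>i. x i * FLT ds \<alpha> x i) - norm1 d (\<lambda>i. x i * FLT ds \<alpha> y i)
      = (\<Sum>i<d. \<bar>x i\<bar> * FLT ds \<alpha> x i - \<bar>x i\<bar> * FLT ds \<alpha> y i)"
    unfolding norm1_def ab sum_subtractf ..
  also have "\<dots> = (\<Sum>k<length ds. \<Sum>i\<in>block ds k. \<bar>x i\<bar> * FLT ds \<alpha> x i - \<bar>x i\<bar> * FLT ds \<alpha> y i)"
    unfolding d by (rule sum_blocks) simp
  also have "\<dots> \<le> (\<Sum>k<length ds. \<Sum>i\<in>block ds k. \<bar>x i - y i\<bar>)"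
    by (rule sum_mono) (rule per_block[OF _ assms(2,3)], simp)
  also have "\<dots> = norm1 d (\<lambda>i. x i - y i)"
    unfolding norm1_def d by (rule sum_blocks[symmetric]) simp
  also have "\<dots> \<le> 2 * norm1 d (\<lambda>i. x i - y i)"
    unfolding norm1_def by (simp add: sum_nonneg)
  finally show ?thesis .
qed

end
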